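(* Let $X$ be a space with $e(X)>\omega$ and $Y$ a $T_1$ space with $c(Y)>\omega$. Then $X\times Y$ is not set star Lindelöf.
   Context: $e(X)$ is the supremum of cardinalities of closed discrete subsets of $X$; $c(Y)$ is the supremum of cardinalities of families of pairwise disjoint nonempty open subsets of $Y$. For a family $\mathcal U$ of subsets of $Z$ and $A\subseteq Z$, $st(A,\mathcal U)=\bigcup\{U\in\mathcal U: U\cap A\neq\emptyset\}$. A space $Z$ is set star Lindelöf if for every nonempty $A\subseteq Z$ and every family $\mathcal U$ of open subsets with $\overline A\subseteq\bigcup\mathcal U$ there is a countable $\mathcal V\subseteq\mathcal U$ with $A\subseteq st(\bigcup\mathcal V,\mathcal U)$. *)

theory Defs
  imports "HOL-Analysis.Analysis"
begin

text \<open>Extent strictly bigger than omega: some closed discrete subset is uncountable.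
  (The supremum of cardinalities of closed discrete subsets exceeds omega iff some such
  subset has cardinality greater than omega.)\<close>
definition extent_gt_omega :: "'a topology \<Rightarrow> bool" where
  "extent_gt_omega X \<longleftrightarrow>
     (\<exists>D. D \<subseteq> topspace X \<and> closedin X D \<and> subtopology X D = discrete_topology D
          \<and> uncountable D)"

definition cellularity_gt_omega :: "'a topology \<Rightarrow> bool" where
  "cellularity_gt_omega Y \<longleftrightarrow>
     (\<exists>\<W>. (\<forall>W\<in>\<W>. openin Y W \<and> W \<noteq> {}) \<and> pairwise disjnt \<W> \<and> uncountable \<W>)"

definition star :: "'a set \<Rightarrow> 'a set set \<Rightarrow> 'a set" where
  "star A \<U> = \<Union>{U \<in> \<U>. U \<inter> A \<noteq> {}}"

definition set_star_lindelof :: "'a topology \<Rightarrow> bool" where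
  "set_star_lindelof Z \<longleftrightarrow>
     (\<forall>A \<U>. A \<noteq> {} \<and> A \<subseteq> topspace Z \<and> (\<forall>U\<in>\<U>. openin Z U)
            \<and> Z closure_of A \<subseteq> \<Union>\<U>
        \<longrightarrow> (\<exists>\<V>. \<V> \<subseteq> \<U> \<and> countable \<V> \<and> A \<subseteq> star (\<Union>\<V>) \<U>))"

end

theory Submission
  imports Defs
begin

lemma core:
  fixes X :: "'a topology" and Y :: "'b topology"
  assumes Dtop: "D \<subseteq> topspace X"
    and Dcl: "\<And>S. S \<subseteq> D \<Longrightarrow> closedin X S"
    and D'D: "D' \<subseteq> D" and unc: "uncountable D'"
    and t1: "t1_space Y"
    and Wop: "\<forall>W\<in>\<W>. openin Y W \<and> W \<noteq> {}" and Wdis: "pairwise disjnt \<W>"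
    and finj: "inj_on f D'" and fW: "f ` D' \<subseteq> \<W>"
  shows "\<not> set_star_lindelof (prod_topology X Y)"
proof
  assume ssl: "set_star_lindelof (prod_topology X Y)"
  define Op where "Op d = topspace X - (D - {d})" for d
  define y where "y d = (SOME z. z \<in> f d)" for d
  define U where "U d = Op d \<times> f d" for d
  define A where "A = (\<lambda>d. (d, y d)) ` D'"
  have fdop: "openin Y (f d)" "f d \<noteq> {}" if "d \<in> D'" for d using Wop fW that by auto
  have yin: "y d \<in> f d" if "d \<in> D'" for d
    unfolding y_def using fdop(2)[OF that] by (simp add: some_in_eq)
  have ytop: "y d \<in> topspace Y" if "d \<in> D'" for d
    using yin[OF that] openin_subset[OF fdop(1)[OF that]] by auto
  have Oop: "openin X (Op d)" for d
    unfolding Op_def by (rule openin_diff) (auto intro: Dcl)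
  have OD: "Op d \<inter> D \<subseteq> {d}" for d unfolding Op_def by auto
  have dO: "d \<in> Op d" if "d \<in> D" for d unfolding Op_def using that Dtop by auto
  have Wsame: "d = e" if "d \<in> D'" "e \<in> D'" "f d \<inter> f e \<noteq> {}" for d e
  proof -
    have "f d = f e" using Wdis fW that unfolding pairwise_def disjnt_def by blast
    then show ?thesis using finj that by (auto dest: inj_onD)
  qed
  have Uop: "openin (prod_topology X Y) (U d)" if "d \<in> D'" for d
    unfolding U_def openin_prod_Times_iff using Oop fdop[OF that] by auto
  have Usame: "d = e" if "d \<in> D'" "e \<in> D'" "U d \<inter> U e \<noteq> {}" for d e
  proof -
    have "f d \<inter> f e \<noteq> {}" using that(3) unfolding U_def by auto
    then show ?thesis using Wsame that(1,2) by simp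
  qed
  have Uinj: "inj_on U D'"
  proof (rule inj_onI)
    fix d e assume "d \<in> D'" "e \<in> D'" "U d = U e"
    moreover have "(d, y d) \<in> U d" unfolding U_def using dO yin \<open>d \<in> D'\<close> D'D by auto
    ultimately show "d = e" using Usame by blast
  qed
  have Ane: "A \<noteq> {}" using unc A_def by auto
  have Atop: "A \<subseteq> topspace (prod_topology X Y)"
    unfolding A_def using Dtop D'D ytop by auto
  have clos: "prod_topology X Y closure_of A \<subseteq> \<Union>(U ` D')"
  proof
    fix z assume z: "z \<in> prod_topology X Y closure_of A"
    obtain x w where zxw: "z = (x, w)" by fastforce
    have xt: "x \<in> topspace X" and wt: "w \<in> topspace Y"
      using z zxw closure_of_subset_topspace by fastforce+
    have nb: "\<And>T. z \<in> T \<Longrightarrow> openin (prod_topology X Y) T \<Longrightarrow> \<exists>a\<in>A. a \<in> T"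
      using z by (auto simp: in_closure_of)
    have xD: "x \<in> D"
    proof (rule ccontr)
      assume "x \<notin> D"
      have "openin (prod_topology X Y) ((topspace X - D) \<times> topspace Y)"
        unfolding openin_prod_Times_iff by (auto intro: openin_diff Dcl)
      then obtain a where "a \<in> A" "a \<in> (topspace X - D) \<times> topspace Y"
        using nb[of "(topspace X - D) \<times> topspace Y"] zxw xt wt \<open>x \<notin> D\<close> by auto
      then show False unfolding A_def using D'D by auto
    qed
    have openT: "openin (prod_topology X Y) (Op x \<times> V)" if "openin Y V" for V
      unfolding openin_prod_Times_iff using Oop that by auto
    obtain a where "a \<in> A" "a \<in> Op x \<times> topspace Y"
      using nb[OF _ openT[OF openin_topspace]] zxw dO[OF xD] wt by auto
    then have xD': "x \<in> D'" unfolding A_def using OD D'D by auto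
    have "w = y x"
    proof (rule ccontr)
      assume "w \<noteq> y x"
      then obtain V where V: "openin Y V" "w \<in> V" "y x \<notin> V"
        using t1 wt ytop[OF xD'] unfolding t1_space_def by blast
      obtain a where "a \<in> A" "a \<in> Op x \<times> V"
        using nb[OF _ openT[OF V(1)]] zxw dO[OF xD] V by auto
      then obtain d where "d \<in> D'" "d \<in> Op x" "y d \<in> V" unfolding A_def by auto
      then have "d = x" using OD D'D by auto
      then show False using V \<open>y d \<in> V\<close> by simp
    qed
    then show "z \<in> \<Union>(U ` D')"
      using zxw xD' dO[OF xD] yin[OF xD'] unfolding U_def by auto
  qed
  obtain \<V> where V: "\<V> \<subseteq> U ` D'" "countable \<V>" "A \<subseteq> star (\<Union>\<V>) (U ` D')"
  proof -
    have "\<forall>u\<in>U ` D'. openin (prod_topology X Y) u" using Uop by auto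
    then show ?thesis using that ssl[unfolded set_star_lindelof_def, rule_format, of A "U ` D'"]
      Ane Atop clos by blast
  qed
  have "D' \<subseteq> {d \<in> D'. U d \<in> \<V>}"
  proof
    fix d assume d: "d \<in> D'"
    have "(d, y d) \<in> A" using d A_def by auto
    then obtain e where e: "e \<in> D'" "(d, y d) \<in> U e" "U e \<inter> \<Union>\<V> \<noteq> {}"
      using V(3) unfolding star_def by blast
    have "f d \<inter> f e \<noteq> {}" using e(2) yin[OF d] unfolding U_def by auto
    then have "e = d" using Wsame d e(1) by blast
    obtain v where v: "v \<in> \<V>" "U e \<inter> v \<noteq> {}" using e(3) by auto
    then obtain e' where e': "e' \<in> D'" "v = U e'" using V(1) by auto
    then have "e = e'" using Usame e(1) v by blast
    then show "d \<in> {d \<in> D'. U d \<in> \<V>}" using \<open>e = d\<close> d v e' by auto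
  qed
  moreover have "countable {d \<in> D'. U d \<in> \<V>}"
  proof (rule countable_image_inj_on)
    show "countable (U ` {d \<in> D'. U d \<in> \<V>})"
      by (rule countable_subset[OF _ V(2)]) auto
    show "inj_on U {d \<in> D'. U d \<in> \<V>}" by (rule inj_on_subset[OF Uinj]) auto
  qed
  ultimately have "countable D'" by (rule countable_subset)
  then show False using unc by simp
qed

theorem proposition3p4:
  fixes X :: "'a topology" and Y :: "'b topology"
  assumes "extent_gt_omega X"
    and "t1_space Y"
    and "cellularity_gt_omega Y"
  shows "\<not> set_star_lindelof (prod_topology X Y)"
proof -
  obtain D where D: "D \<subseteq> topspace X" "closedin X D" "subtopology X D = discrete_topology D"
      "uncountable D"
    using assms(1) unfolding extent_gt_omega_def by blast
  obtain \<W> where W: "\<forall>W\<in>\<W>. openin Y W \<and> W \<noteq> {}" "pairwise disjnt \<W>" "uncountable \<W>"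
    using assms(3) unfolding cellularity_gt_omega_def by blast
  have Dcl: "closedin X S" if "S \<subseteq> D" for S
  proof (rule closedin_trans_full[OF _ D(2)])
    show "closedin (subtopology X D) S" using D(3) that by simp
  qed
  have "(card_of D, card_of \<W>) \<in> ordLeq \<or> (card_of \<W>, card_of D) \<in> ordLeq"
    by (rule ordLeq_total[OF card_of_Well_order card_of_Well_order])
  then show ?thesis
  proof
    assume "(card_of D, card_of \<W>) \<in> ordLeq"
    then obtain f where f: "inj_on f D" "f ` D \<subseteq> \<W>" using card_of_ordLeq[of D \<W>, symmetric] by blast
    show ?thesis by (rule core[OF D(1) Dcl order_refl D(4) assms(2) W(1,2) f])
  next
    assume "(card_of \<W>, card_of D) \<in> ordLeq"
    then obtain g where g: "inj_on g \<W>" "g ` \<W> \<subseteq> D" using card_of_ordLeq[of \<W> D, symmetric] by blast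
    have unc: "uncountable (g ` \<W>)" using countable_image_inj_on[OF _ g(1)] W(3) by auto
    have i1: "inj_on (inv_into \<W> g) (g ` \<W>)" by (rule inj_on_inv_into) simp
    have i2: "inv_into \<W> g ` (g ` \<W>) \<subseteq> \<W>" by (auto intro: inv_into_into)
    show ?thesis by (rule core[OF D(1) Dcl g(2) unc assms(2) W(1,2) i1 i2])
  qed
qed

end
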